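(* Let $M$ be a strong module of a dually-CPT poset $\mathbf{P}=(X,P)$ and let $\{W_x\}_{x\in X}$ be a CPT representation of $\mathbf{P}$ on a host tree $T$ in which all the paths $W_m$, $m\in M$, arrive at (have an endpoint at) a common vertex $a$ of $T$. If no element of $\mathbf{P}$ is greater than all elements of $M$, then there exists a CPT representation of $\mathbf{P}$ in which the paths representing the elements of $M$ all have different endpoints.
   Context: A CPT representation of $\mathbf{P}$ assigns to each $x\in X$ a path $W_x$ of a host tree $T$ with $x<y$ iff $W_x\subsetneq W_y$; $\mathbf{P}$ is dually-CPT if $\mathbf{P}$ and its dual both have such representations. A module is a set $M\subseteq X$ such that each $y\notin M$ is comparable to all or none of the elements of $M$; it is strong if for every module $M'$, $M\cap M'=\emptyset$, $M\subseteq M'$ or $M'\subseteq M$. *)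

theory Defs
  imports Main
begin

definition poset :: "'a set \<Rightarrow> ('a \<Rightarrow> 'a \<Rightarrow> bool) \<Rightarrow> bool" where
  "poset X lt \<longleftrightarrow> finite X \<and> (\<forall>x\<in>X. \<not> lt x x)
     \<and> (\<forall>x\<in>X. \<forall>y\<in>X. \<forall>z\<in>X. lt x y \<and> lt y z \<longrightarrow> lt x z)"

definition comparable :: "('a \<Rightarrow> 'a \<Rightarrow> bool) \<Rightarrow> 'a \<Rightarrow> 'a \<Rightarrow> bool" where
  "comparable lt x y \<longleftrightarrow> lt x y \<or> lt y x"

definition is_path :: "('v \<Rightarrow> 'v \<Rightarrow> bool) \<Rightarrow> 'v list \<Rightarrow> bool" where
  "is_path E xs \<longleftrightarrow> xs \<noteq> [] \<and> distinct xs \<and> (\<forall>i. Suc i < length xs \<longrightarrow> E (xs ! i) (xs ! Suc i))"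

definition tree :: "'v set \<Rightarrow> ('v \<Rightarrow> 'v \<Rightarrow> bool) \<Rightarrow> bool" where
  "tree V E \<longleftrightarrow> finite V \<and> V \<noteq> {}
     \<and> (\<forall>u v. E u v \<longrightarrow> u \<in> V \<and> v \<in> V)
     \<and> (\<forall>u v. E u v \<longrightarrow> E v u) \<and> (\<forall>u. \<not> E u u)
     \<and> (\<forall>u\<in>V. \<forall>v\<in>V. \<exists>!xs. is_path E xs \<and> hd xs = u \<and> last xs = v)"

definition tree_path :: "'v set \<Rightarrow> ('v \<Rightarrow> 'v \<Rightarrow> bool) \<Rightarrow> 'v set \<Rightarrow> bool" where
  "tree_path V E W \<longleftrightarrow> (\<exists>xs. is_path E xs \<and> set xs \<subseteq> V \<and> set xs = W)"

definition endpoint :: "('v \<Rightarrow> 'v \<Rightarrow> bool) \<Rightarrow> 'v \<Rightarrow> 'v set \<Rightarrow> bool" where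
  "endpoint E v W \<longleftrightarrow> (\<exists>xs. is_path E xs \<and> set xs = W \<and> (v = hd xs \<or> v = last xs))"

definition cpt_rep :: "'a set \<Rightarrow> ('a \<Rightarrow> 'a \<Rightarrow> bool) \<Rightarrow> 'v set \<Rightarrow> ('v \<Rightarrow> 'v \<Rightarrow> bool) \<Rightarrow> ('a \<Rightarrow> 'v set) \<Rightarrow> bool" where
  "cpt_rep X lt V E W \<longleftrightarrow> tree V E \<and> (\<forall>x\<in>X. tree_path V E (W x))
     \<and> (\<forall>x\<in>X. \<forall>y\<in>X. lt x y \<longleftrightarrow> W x \<subset> W y)"

text \<open>Host trees are finite, so WLOG their vertices are natural numbers.\<close>
definition is_CPT :: "'a set \<Rightarrow> ('a \<Rightarrow> 'a \<Rightarrow> bool) \<Rightarrow> bool" where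
  "is_CPT X lt \<longleftrightarrow> (\<exists>(V :: nat set) E W. cpt_rep X lt V E W)"

definition dually_CPT :: "'a set \<Rightarrow> ('a \<Rightarrow> 'a \<Rightarrow> bool) \<Rightarrow> bool" where
  "dually_CPT X lt \<longleftrightarrow> is_CPT X lt \<and> is_CPT X (\<lambda>x y. lt y x)"

definition module :: "'a set \<Rightarrow> ('a \<Rightarrow> 'a \<Rightarrow> bool) \<Rightarrow> 'a set \<Rightarrow> bool" where
  "module X lt M \<longleftrightarrow> M \<subseteq> X \<and>
     (\<forall>y\<in>X - M. (\<forall>m\<in>M. comparable lt y m) \<or> (\<forall>m\<in>M. \<not> comparable lt y m))"

definition strong_module :: "'a set \<Rightarrow> ('a \<Rightarrow> 'a \<Rightarrow> bool) \<Rightarrow> 'a set \<Rightarrow> bool" where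
  "strong_module X lt M \<longleftrightarrow> module X lt M \<and>
     (\<forall>M'. module X lt M' \<longrightarrow> M \<inter> M' = {} \<or> M \<subseteq> M' \<or> M' \<subseteq> M)"

end

theory Submission
  imports Defs "HOL-Library.Sublist" "HOL-Library.List_Lexorder" "HOL-Library.Product_Lexorder"
begin

lemma is_path_single[simp]: "is_path E [x]"
  by (simp add: is_path_def)

lemma is_path_Cons2: "is_path E (x # y # xs) \<longleftrightarrow> E x y \<and> x \<notin> set (y # xs) \<and> is_path E (y # xs)"
  unfolding is_path_def
  by (auto simp: nth_Cons split: nat.splits)

lemma is_path_nonempty: "is_path E xs \<Longrightarrow> xs \<noteq> []"
  by (simp add: is_path_def)

lemma is_path_take: "is_path E xs \<Longrightarrow> 0 < k \<Longrightarrow> is_path E (take k xs)"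
  unfolding is_path_def by auto

lemma is_path_rev: "(\<forall>u v. E u v \<longrightarrow> E v u) \<Longrightarrow> is_path E xs \<Longrightarrow> is_path E (rev xs)"
  unfolding is_path_def
proof (intro conjI allI impI)
  assume s: "\<forall>u v. E u v \<longrightarrow> E v u" and p: "xs \<noteq> [] \<and> distinct xs \<and> (\<forall>i. Suc i < length xs \<longrightarrow> E (xs ! i) (xs ! Suc i))"
  show "rev xs \<noteq> []" "distinct (rev xs)" using p by auto
  fix i assume i: "Suc i < length (rev xs)"
  have "E (xs ! (length xs - Suc (Suc i))) (xs ! Suc (length xs - Suc (Suc i)))"
    using p i by auto
  moreover have "Suc (length xs - Suc (Suc i)) = length xs - Suc i" using i by auto
  ultimately show "E (rev xs ! i) (rev xs ! Suc i)" using s i by (auto simp: rev_nth)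
qed

lemma is_path_append:
  assumes "is_path E xs" "is_path E ys" "set xs \<inter> set ys = {}" "E (last xs) (hd ys)"
  shows "is_path E (xs @ ys)"
  unfolding is_path_def
proof (intro conjI allI impI)
  show "xs @ ys \<noteq> []" "distinct (xs @ ys)" using assms by (auto simp: is_path_def)
  fix i assume i: "Suc i < length (xs @ ys)"
  consider "Suc i < length xs" | "Suc i = length xs" | "length xs \<le> i" by linarith
  then show "E ((xs @ ys) ! i) ((xs @ ys) ! Suc i)"
  proof cases
    case 1 then show ?thesis using assms(1) by (auto simp: is_path_def nth_append)
  next
    case 2
    have "xs ! i = last xs" using 2 assms(1) by (simp add: is_path_def last_conv_nth flip: 2)
    moreover have "ys ! 0 = hd ys" using assms(2) by (simp add: is_path_def hd_conv_nth)
    ultimately show ?thesis using 2 assms(4) by (auto simp: nth_append)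
  next
    case 3
    then have "Suc (i - length xs) < length ys" using i by auto
    then have "E (ys ! (i - length xs)) (ys ! Suc (i - length xs))" using assms(2) by (auto simp: is_path_def)
    moreover have "Suc i - length xs = Suc (i - length xs)" using 3 by auto
    ultimately show ?thesis using 3 by (auto simp: nth_append)
  qed
qed

lemma is_path_map_upt:
  assumes "i < j" "inj_on g {i..<j}" "\<And>k. i \<le> k \<Longrightarrow> Suc k < j \<Longrightarrow> E (g k) (g (Suc k))"
  shows "is_path E (map g [i..<j])"
  unfolding is_path_def using assms by (auto simp: distinct_map)

lemma is_path_set_sub: "is_path E xs \<Longrightarrow> (\<forall>u v. E u v \<longrightarrow> u \<in> V \<and> v \<in> V) \<Longrightarrow> hd xs \<in> V \<Longrightarrow> set xs \<subseteq> V"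
proof
  fix x assume p: "is_path E xs" and e: "\<forall>u v. E u v \<longrightarrow> u \<in> V \<and> v \<in> V" and h: "hd xs \<in> V" and x: "x \<in> set xs"
  then obtain i where i: "i < length xs" "xs ! i = x" by (auto simp: in_set_conv_nth)
  show "x \<in> V"
  proof (cases i)
    case 0 then show ?thesis using i h p by (auto simp: is_path_def hd_conv_nth)
  next
    case (Suc k) then show ?thesis using p e i by (auto simp: is_path_def)
  qed
qed

lemma tree_unique:
  assumes "tree V E" "is_path E p" "is_path E q" "hd p = hd q" "last p = last q" "hd p \<in> V" "last p \<in> V"
  shows "p = q"
  using assms unfolding tree_def by metis

lemma tree_edges: "tree V E \<Longrightarrow> E u v \<Longrightarrow> u \<in> V \<and> v \<in> V"
  by (simp add: tree_def)
lemma tree_sym: "tree V E \<Longrightarrow> E u v \<Longrightarrow> E v u"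
  by (simp add: tree_def)
lemma tree_irrefl: "tree V E \<Longrightarrow> \<not> E u u"
  by (simp add: tree_def)

lemma hd_one_nbr:
  assumes t: "tree V E" and p: "is_path E xs" and sv: "set xs \<subseteq> V"
    and y: "y \<in> set xs" "E (hd xs) y"
  shows "y = xs ! 1"
proof -
  obtain j where j: "j < length xs" "xs ! j = y" using y by (auto simp: in_set_conv_nth)
  have ne: "xs \<noteq> []" using p by (simp add: is_path_def)
  have h0: "hd xs = xs ! 0" using ne by (simp add: hd_conv_nth)
  have "j \<noteq> 0" using j y h0 tree_irrefl[OF t] by metis
  moreover have "\<not> j \<ge> 2"
  proof
    assume j2: "j \<ge> 2"
    define p1 where "p1 = [hd xs, y]"
    define p2 where "p2 = take (Suc j) xs"
    have "hd xs \<noteq> y" using tree_irrefl[OF t] y by metis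
    then have pp1: "is_path E p1" unfolding p1_def using y by (simp add: is_path_Cons2)
    have pp2: "is_path E p2" unfolding p2_def using is_path_take[OF p] by simp
    have "hd p2 = hd xs" unfolding p2_def using ne by simp
    moreover have "last p2 = y" unfolding p2_def using j by (simp add: take_Suc_conv_app_nth)
    moreover have "hd xs \<in> V" "y \<in> V" using sv y ne by auto
    ultimately have "p1 = p2" using tree_unique[OF t pp1 pp2] unfolding p1_def by simp
    then have "length p1 = length p2" by simp
    then show False unfolding p1_def p2_def using j j2 by simp
  qed
  ultimately have "j = 1" by simp
  then show ?thesis using j by simp
qed

lemma interior_two_nbrs:
  assumes p: "is_path E ys" and v: "v \<in> set ys" "v \<noteq> hd ys" "v \<noteq> last ys"
    and s: "\<forall>u w. E u w \<longrightarrow> E w u"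
  shows "\<exists>y1 y2. y1 \<in> set ys \<and> y2 \<in> set ys \<and> y1 \<noteq> y2 \<and> E v y1 \<and> E v y2"
proof -
  obtain i where i: "i < length ys" "ys ! i = v" using v by (auto simp: in_set_conv_nth)
  have ne: "ys \<noteq> []" using p by (simp add: is_path_def)
  have "i \<noteq> 0" using i v ne by (metis hd_conv_nth)
  moreover have "Suc i \<noteq> length ys"
  proof
    assume "Suc i = length ys"
    then have "i = length ys - 1" by simp
    then show False using i v ne by (simp add: last_conv_nth)
  qed
  ultimately obtain k where k: "i = Suc k" "Suc i < length ys" using i by (cases i) auto
  have e1: "E (ys ! k) (ys ! i)" using p k by (auto simp: is_path_def)
  have e2: "E (ys ! i) (ys ! Suc i)" using p k by (auto simp: is_path_def)
  have d: "ys ! k \<noteq> ys ! Suc i" using p k by (auto simp: is_path_def nth_eq_iff_index_eq)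
  show ?thesis using e1 e2 d s k i
    by (metis Suc_lessD nth_mem)
qed

lemma endpoint_hd_last:
  assumes t: "tree V E" and p: "is_path E ys" and sv: "set ys \<subseteq> V" and ep: "endpoint E v (set ys)"
  shows "v = hd ys \<or> v = last ys"
proof (rule ccontr)
  assume nv: "\<not> (v = hd ys \<or> v = last ys)"
  have s: "\<forall>u w. E u w \<longrightarrow> E w u" using t by (simp add: tree_def)
  obtain xs where xs: "is_path E xs" "set xs = set ys" "v = hd xs \<or> v = last xs"
    using ep unfolding endpoint_def by blast
  obtain zs where zs: "is_path E zs" "set zs = set ys" "v = hd zs"
  proof (cases "v = hd xs")
    case True then show ?thesis using that xs by blast
  next
    case False
    then have "v = last xs" using xs by blast
    then have "v = hd (rev xs)" using xs(1) by (simp add: is_path_def hd_rev)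
    then show ?thesis using that[of "rev xs"] is_path_rev[OF s xs(1)] xs by simp
  qed
  have vin: "v \<in> set ys" using zs is_path_nonempty[OF zs(1)] by (metis hd_in_set)
  obtain y1 y2 where y: "y1 \<in> set ys" "y2 \<in> set ys" "y1 \<noteq> y2" "E v y1" "E v y2"
    using interior_two_nbrs[OF p vin _ _ s] nv by blast
  have "y1 = zs ! 1" using hd_one_nbr[OF t zs(1)] zs sv y by auto
  moreover have "y2 = zs ! 1" using hd_one_nbr[OF t zs(1)] zs sv y by auto
  ultimately show False using y by simp
qed

lemma common_prefix:
  assumes t: "tree V E" and p: "is_path E p" and q: "is_path E q" and sp: "set p \<subseteq> V"
    and h: "hd p = hd q" and i: "i < length p" and j: "j < length q" and u: "p ! i = q ! j"
  shows "take (Suc i) p = take (Suc j) q"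
proof -
  have ne: "p \<noteq> []" "q \<noteq> []" using p q by (auto simp: is_path_def)
  show ?thesis
  proof (rule tree_unique[OF t is_path_take[OF p] is_path_take[OF q]])
    have a: "hd (take (Suc i) p) = hd p" using ne by (cases p) auto
    have b: "hd (take (Suc j) q) = hd q" using ne by (cases q) auto
    have c: "last (take (Suc i) p) = p ! i" using i by (simp add: take_Suc_conv_app_nth)
    have d: "last (take (Suc j) q) = q ! j" using j by (simp add: take_Suc_conv_app_nth)
    show "hd (take (Suc i) p) = hd (take (Suc j) q)" using a b h by simp
    show "last (take (Suc i) p) = last (take (Suc j) q)" using c d u by simp
    show "hd (take (Suc i) p) \<in> V" using a ne sp by auto
    show "last (take (Suc i) p) \<in> V" using c i sp by auto
  qed simp_all
qed

lemma prefix_of_subset: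
  assumes t: "tree V E" and p: "is_path E p" and q: "is_path E q" and sp: "set p \<subseteq> V"
    and h: "hd p = hd q" and sub: "set p \<subseteq> set q"
  shows "prefix p q"
proof -
  have ne: "p \<noteq> []" using p by (auto simp: is_path_def)
  have "last p \<in> set q" using sub ne by auto
  then obtain j where j: "j < length q" "q ! j = last p" by (auto simp: in_set_conv_nth)
  have "take (Suc (length p - 1)) p = take (Suc j) q"
    apply (rule common_prefix[OF t p q sp h])
    using ne j by (auto simp: last_conv_nth)
  then have "p = take (Suc j) q" using ne by simp
  then show ?thesis by (metis take_is_prefix)
qed

definition add_leaf :: "('v \<Rightarrow> 'v \<Rightarrow> bool) \<Rightarrow> 'v \<Rightarrow> 'v \<Rightarrow> 'v \<Rightarrow> 'v \<Rightarrow> bool" where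
  "add_leaf E u w = (\<lambda>x y. E x y \<or> (x = u \<and> y = w) \<or> (x = w \<and> y = u))"

lemma is_path_mono: "is_path E xs \<Longrightarrow> (\<And>x y. E x y \<Longrightarrow> E' x y) \<Longrightarrow> is_path E' xs"
  unfolding is_path_def by auto

lemma is_path_hd_last_eq: assumes p: "is_path E xs" and h: "hd xs = last xs" shows "xs = [hd xs]"
proof (cases xs)
  case Nil then show ?thesis using p by (simp add: is_path_def)
next
  case (Cons z zs)
  show ?thesis
  proof (cases "zs = []")
    case True then show ?thesis using Cons by simp
  next
    case False
    then have "last zs \<in> set zs" by simp
    moreover have "z \<notin> set zs" using p Cons by (simp add: is_path_def)
    ultimately show ?thesis using h Cons False by simp
  qed
qed

lemma is_path_rev_iff: "(\<forall>u v. E u v \<longrightarrow> E v u) \<Longrightarrow> is_path E (rev xs) \<longleftrightarrow> is_path E xs"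
  by (metis is_path_rev rev_rev_ident)

lemma add_leaf_tree:
  assumes t: "tree V E" and u: "u \<in> V" and w: "w \<notin> V"
  shows "tree (insert w V) (add_leaf E u w)"
proof -
  let ?E = "add_leaf E u w"
  have s: "\<forall>x y. E x y \<longrightarrow> E y x" using t by (simp add: tree_def)
  have s': "\<forall>x y. ?E x y \<longrightarrow> ?E y x" using s by (auto simp: add_leaf_def)
  have uw: "u \<noteq> w" using u w by auto
  have ew: "\<And>y. ?E w y \<Longrightarrow> y = u" using w tree_edges[OF t] uw by (auto simp: add_leaf_def)
  have toE: "is_path E xs" if "is_path ?E xs" "w \<notin> set xs" for xs
  proof -
    have "E (xs ! i) (xs ! Suc i)" if i: "Suc i < length xs" for i
    proof -
      have "xs ! i \<noteq> w" "xs ! Suc i \<noteq> w" using i \<open>w \<notin> set xs\<close> nth_mem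
        by (metis Suc_lessD)+
      then show ?thesis using \<open>is_path ?E xs\<close> i unfolding is_path_def add_leaf_def by blast
    qed
    then show ?thesis using \<open>is_path ?E xs\<close> unfolding is_path_def by blast
  qed
  have wend: "w = hd xs \<or> w = last xs" if wp1: "is_path ?E xs" and wp2: "w \<in> set xs" for xs
  proof (rule ccontr)
    assume "\<not> (w = hd xs \<or> w = last xs)"
    then obtain y1 y2 where "y1 \<noteq> y2" "?E w y1" "?E w y2"
      using interior_two_nbrs[OF wp1 wp2 _ _ s'] by blast
    then show False using ew by blast
  qed
  have mono: "is_path ?E xs" if "is_path E xs" for xs
    using is_path_mono[OF that] by (auto simp: add_leaf_def)
  have ue: "\<exists>!xs. is_path E xs \<and> hd xs = x \<and> last xs = y" if "x \<in> V" "y \<in> V" for x y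
    using t that by (simp add: tree_def)
  have inV: "set xs \<subseteq> V" if "is_path E xs" "hd xs \<in> V" for xs
    using is_path_set_sub[OF that(1) _ that(2)] tree_edges[OF t] by blast
  have fromw: "\<exists>!xs. is_path ?E xs \<and> hd xs = w \<and> last xs = y" if y: "y \<in> V" for y
  proof -
    obtain p where p: "is_path E p" "hd p = u" "last p = y" using ue[OF u y] by blast
    have pV: "set p \<subseteq> V" using inV p u by auto
    have ne: "p \<noteq> []" using p by (simp add: is_path_def)
    have ex: "is_path ?E (w # p)"
    proof -
      obtain z zs where pz: "p = z # zs" using ne by (cases p) auto
      show ?thesis using mono[OF p(1)] pz p pV w by (auto simp: is_path_Cons2 add_leaf_def)
    qed
    show ?thesis
    proof (rule ex1I[of _ "w # p"])
      show "is_path ?E (w # p) \<and> hd (w # p) = w \<and> last (w # p) = y" using ex p ne by simp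
    next
      fix xs assume xs: "is_path ?E xs \<and> hd xs = w \<and> last xs = y"
      have xne: "xs \<noteq> []" using xs by (simp add: is_path_def)
      then obtain xs' where xs': "xs = w # xs'" using xs by (cases xs) auto
      have "xs' \<noteq> []" using xs xs' y w by auto
      then obtain z zs where z: "xs' = z # zs" by (cases xs') auto
      have pz: "is_path ?E xs'" "?E w z" "w \<notin> set xs'" using xs xs' z by (auto simp: is_path_Cons2)
      have "z = u" using ew pz by blast
      have pe: "is_path E xs'" using toE pz by blast
      have "last xs' = y" using xs xs' z by simp
      then have "xs' = p" using tree_unique[OF t pe p(1)] p \<open>z = u\<close> z u y by simp
      then show "xs = w # p" using xs' by simp
    qed
  qed
  show ?thesis
    unfolding tree_def
  proof (intro conjI ballI allI impI)
    show "finite (insert w V)" "insert w V \<noteq> {}" using t by (auto simp: tree_def)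
  next
    fix x y assume "?E x y" then show "x \<in> insert w V" "y \<in> insert w V"
      using tree_edges[OF t] u by (auto simp: add_leaf_def)
  next
    fix x y assume "?E x y" then show "?E y x" using s' by blast
  next
    fix x show "\<not> ?E x x" using tree_irrefl[OF t] uw by (auto simp: add_leaf_def)
  next
    fix x y assume x: "x \<in> insert w V" and y: "y \<in> insert w V"
    show "\<exists>!xs. is_path ?E xs \<and> hd xs = x \<and> last xs = y"
    proof (cases "x = w")
      case xw: True
      show ?thesis
      proof (cases "y = w")
        case True
        show ?thesis
        proof (rule ex1I[of _ "[w]"])
          show "is_path ?E [w] \<and> hd [w] = x \<and> last [w] = y" using xw True by simp
        next
          fix xs assume xs: "is_path ?E xs \<and> hd xs = x \<and> last xs = y"
          then have "xs = [hd xs]" using is_path_hd_last_eq[of ?E xs] xw True by simp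
          then show "xs = [w]" using xs xw by simp
        qed
      next
        case False
        then have "y \<in> V" using y by simp
        then show ?thesis using fromw xw by simp
      qed
    next
      case xw: False
      then have xV: "x \<in> V" using x by auto
      show ?thesis
      proof (cases "y = w")
        case True
        from fromw[OF xV] obtain p where p: "is_path ?E p \<and> hd p = w \<and> last p = x"
          and pu: "\<And>q. is_path ?E q \<and> hd q = w \<and> last q = x \<Longrightarrow> q = p" by blast
        show ?thesis
        proof (rule ex1I[of _ "rev p"])
          have "p \<noteq> []" using p by (simp add: is_path_def)
          then show "is_path ?E (rev p) \<and> hd (rev p) = x \<and> last (rev p) = y"
            using p True is_path_rev[OF s'] by (simp add: hd_rev last_rev)
        next
          fix q assume q: "is_path ?E q \<and> hd q = x \<and> last q = y"
          have "q \<noteq> []" using q by (simp add: is_path_def)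
          then have "rev q = p" using pu[of "rev q"] q True is_path_rev[OF s'] by (simp add: hd_rev last_rev)
          then show "q = rev p" by auto
        qed
      next
        case yw: False
        then have yV: "y \<in> V" using y by auto
        obtain p where p: "is_path E p" "hd p = x" "last p = y" using ue[OF xV yV] by blast
        show ?thesis
        proof (rule ex1I[of _ p])
          show "is_path ?E p \<and> hd p = x \<and> last p = y" using p mono by blast
        next
          fix q assume q: "is_path ?E q \<and> hd q = x \<and> last q = y"
          have "w \<notin> set q" using wend q xw yw by blast
          then have "is_path E q" using toE q by blast
          then show "q = p" using tree_unique[OF t _ p(1)] p q xV yV by simp
        qed
      qed
    qed
  qed
qed

definition mapE :: "('v \<Rightarrow> 'w) \<Rightarrow> 'v set \<Rightarrow> ('v \<Rightarrow> 'v \<Rightarrow> bool) \<Rightarrow> 'w \<Rightarrow> 'w \<Rightarrow> bool" where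
  "mapE h V E x y = (\<exists>u\<in>V. \<exists>v\<in>V. x = h u \<and> y = h v \<and> E u v)"

lemma map_is_path:
  assumes inj: "inj_on h V" and p: "is_path E xs" and sv: "set xs \<subseteq> V"
  shows "is_path (mapE h V E) (map h xs)"
  unfolding is_path_def
proof (intro conjI allI impI)
  show "map h xs \<noteq> []" using p by (simp add: is_path_def)
  show "distinct (map h xs)" using p sv inj by (simp add: is_path_def distinct_map inj_on_subset)
  fix i assume i: "Suc i < length (map h xs)"
  have "E (xs ! i) (xs ! Suc i)" using p i by (simp add: is_path_def)
  moreover have "xs ! i \<in> V" "xs ! Suc i \<in> V" using sv i by auto
  ultimately show "mapE h V E (map h xs ! i) (map h xs ! Suc i)"
    using i unfolding mapE_def by auto
qed

lemma unmap_is_path: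
  assumes inj: "inj_on h V" and p: "is_path (mapE h V E) zs" and hz: "hd zs \<in> h ` V"
  shows "zs = map h (map (inv_into V h) zs) \<and> set (map (inv_into V h) zs) \<subseteq> V
    \<and> is_path E (map (inv_into V h) zs)"
proof -
  let ?g = "inv_into V h"
  have sz: "set zs \<subseteq> h ` V"
    using is_path_set_sub[OF p _ hz] unfolding mapE_def by blast
  have 1: "zs = map h (map ?g zs)"
  proof -
    have "map (h \<circ> ?g) zs = map id zs" using sz by (intro map_cong) (auto simp: f_inv_into_f)
    then show ?thesis by simp
  qed
  have 2: "set (map ?g zs) \<subseteq> V" using sz by (auto simp: inv_into_into)
  have 3: "is_path E (map ?g zs)"
    unfolding is_path_def
  proof (intro conjI allI impI)
    show "map ?g zs \<noteq> []" using p by (simp add: is_path_def)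
    have "inj_on ?g (h ` V)" by (rule inj_on_inv_into) simp
    then show "distinct (map ?g zs)" using p sz by (simp add: is_path_def distinct_map inj_on_subset)
    fix i assume i: "Suc i < length (map ?g zs)"
    have "mapE h V E (zs ! i) (zs ! Suc i)" using p i by (simp add: is_path_def)
    then obtain a b where ab: "a \<in> V" "b \<in> V" "zs ! i = h a" "zs ! Suc i = h b" "E a b"
      unfolding mapE_def by blast
    have "?g (h a) = a" "?g (h b) = b" using ab inj by (auto simp: inv_into_f_f)
    then show "E (map ?g zs ! i) (map ?g zs ! Suc i)" using ab i by simp
  qed
  show ?thesis using 1 2 3 by blast
qed

lemma map_tree:
  assumes t: "tree V E" and inj: "inj_on h V"
  shows "tree (h ` V) (mapE h V E)"
  unfolding tree_def
proof (intro conjI ballI allI impI)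
  show "finite (h ` V)" "h ` V \<noteq> {}" using t by (auto simp: tree_def)
next
  fix x y assume "mapE h V E x y" then show "x \<in> h ` V" "y \<in> h ` V" unfolding mapE_def by auto
next
  fix x y assume "mapE h V E x y" then show "mapE h V E y x" using tree_sym[OF t] unfolding mapE_def by blast
next
  fix x show "\<not> mapE h V E x x" using tree_irrefl[OF t] inj unfolding mapE_def by (metis inj_on_def)
next
  fix x y assume x: "x \<in> h ` V" and y: "y \<in> h ` V"
  then obtain x0 y0 where xy: "x0 \<in> V" "y0 \<in> V" "x = h x0" "y = h y0" by blast
  obtain p where p: "is_path E p" "hd p = x0" "last p = y0" using t xy unfolding tree_def by blast
  have pV: "set p \<subseteq> V" using is_path_set_sub[OF p(1) _] tree_edges[OF t] p xy by blast
  have ne: "p \<noteq> []" using p by (simp add: is_path_def)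
  show "\<exists>!xs. is_path (mapE h V E) xs \<and> hd xs = x \<and> last xs = y"
  proof (rule ex1I[of _ "map h p"])
    show "is_path (mapE h V E) (map h p) \<and> hd (map h p) = x \<and> last (map h p) = y"
      using map_is_path[OF inj p(1) pV] p xy ne by (simp add: hd_map last_map)
  next
    fix zs assume zs: "is_path (mapE h V E) zs \<and> hd zs = x \<and> last zs = y"
    let ?q = "map (inv_into V h) zs"
    have u: "zs = map h ?q" "set ?q \<subseteq> V" "is_path E ?q" using unmap_is_path[OF inj _] zs x by auto
    have zne: "zs \<noteq> []" using zs by (simp add: is_path_def)
    have "hd ?q = x0" using zne zs xy inj by (simp add: hd_map inv_into_f_f)
    moreover have "last ?q = y0" using zne zs xy inj by (simp add: last_map inv_into_f_f)
    ultimately have "?q = p" using tree_unique[OF t u(3) p(1)] p xy by simp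
    then show "zs = map h p" using u(1) by simp
  qed
qed

definition pP :: "'v \<Rightarrow> nat \<Rightarrow> 'v + bool \<times> nat" where
  "pP a i = (if i = 0 then Inl a else Inr (True, i))"
definition pQ :: "'v \<Rightarrow> nat \<Rightarrow> 'v + bool \<times> nat" where
  "pQ c i = (if i = 0 then Inl c else Inr (False, i))"
definition Vn :: "'v set \<Rightarrow> nat \<Rightarrow> ('v + bool \<times> nat) set" where
  "Vn V n = Inl ` V \<union> (\<lambda>i. Inr (True, i)) ` {1..n} \<union> (\<lambda>i. Inr (False, i)) ` {1..n}"
definition En :: "('v \<Rightarrow> 'v \<Rightarrow> bool) \<Rightarrow> 'v \<Rightarrow> 'v \<Rightarrow> nat \<Rightarrow> 'v + bool \<times> nat \<Rightarrow> 'v + bool \<times> nat \<Rightarrow> bool" where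
  "En E a c n x y = ((\<exists>u v. x = Inl u \<and> y = Inl v \<and> E u v)
     \<or> (\<exists>i<n. (x = pP a i \<and> y = pP a (Suc i)) \<or> (x = pP a (Suc i) \<and> y = pP a i))
     \<or> (\<exists>i<n. (x = pQ c i \<and> y = pQ c (Suc i)) \<or> (x = pQ c (Suc i) \<and> y = pQ c i)))"

lemma pP_in: "a \<in> V \<Longrightarrow> i \<le> n \<Longrightarrow> pP a i \<in> Vn V n"
  by (auto simp: pP_def Vn_def)
lemma pQ_in: "c \<in> V \<Longrightarrow> i \<le> n \<Longrightarrow> pQ c i \<in> Vn V n"
  by (auto simp: pQ_def Vn_def)

lemma En_Suc: "En E a c (Suc n) = add_leaf (add_leaf (En E a c n) (pP a n) (pP a (Suc n))) (pQ c n) (pQ c (Suc n))"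
  by (intro ext) (auto simp: En_def add_leaf_def less_Suc_eq)

lemma Vn_Suc: "Vn V (Suc n) = insert (pQ c (Suc n)) (insert (pP a (Suc n)) (Vn V n))"
  by (auto simp: Vn_def pP_def pQ_def)

lemma En_0: "tree V E \<Longrightarrow> En E a c 0 = mapE Inl V E"
  by (intro ext) (auto simp: En_def mapE_def dest: tree_edges)

lemma Vn_0: "Vn V 0 = Inl ` V"
  by (simp add: Vn_def)

lemma pend_tree:
  assumes t: "tree V E" and a: "a \<in> V" and c: "c \<in> V"
  shows "tree (Vn V n) (En E a c n)"
proof (induction n)
  case 0
  show ?case using map_tree[OF t, of Inl] t by (simp add: En_0 Vn_0)
next
  case (Suc n)
  have 1: "tree (insert (pP a (Suc n)) (Vn V n)) (add_leaf (En E a c n) (pP a n) (pP a (Suc n)))"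
    by (rule add_leaf_tree[OF Suc.IH pP_in[OF a]]) (auto simp: pP_def Vn_def)
  have 2: "tree (insert (pQ c (Suc n)) (insert (pP a (Suc n)) (Vn V n))) (add_leaf (add_leaf (En E a c n) (pP a n) (pP a (Suc n))) (pQ c n) (pQ c (Suc n)))"
    by (rule add_leaf_tree[OF 1]) (auto simp: pQ_def pP_def Vn_def c)
  show ?case using 2 by (simp add: En_Suc Vn_Suc[of V n c a])
qed

lemma finite_max_rel:
  assumes "finite S" "S \<noteq> {}" "\<forall>x\<in>S. \<not> lt x x" "\<forall>x\<in>S. \<forall>y\<in>S. \<forall>z\<in>S. lt x y \<and> lt y z \<longrightarrow> lt x z"
  shows "\<exists>m\<in>S. \<forall>y\<in>S. \<not> lt m y"
  using assms
proof (induction S rule: finite_ne_induct)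
  case (singleton x)
  have "\<not> lt x x" using singleton.prems(1) by simp
  then show ?case by simp
next
  case (insert x F)
  have p1: "\<forall>x\<in>F. \<not> lt x x" using insert.prems(1) by blast
  have p2: "\<forall>x\<in>F. \<forall>y\<in>F. \<forall>z\<in>F. lt x y \<and> lt y z \<longrightarrow> lt x z" using insert.prems(2) by blast
  obtain m where m: "m \<in> F" "\<forall>y\<in>F. \<not> lt m y" using insert.IH[OF p1 p2] by blast
  show ?case
  proof (cases "lt m x")
    case True
    have "\<forall>y\<in>insert x F. \<not> lt x y"
    proof
      fix y assume y: "y \<in> insert x F"
      show "\<not> lt x y"
      proof
        assume xy: "lt x y"
        show False
        proof (cases "y = x")
          case True then show False using xy insert.prems(1) by simp
        next
          case False
          then have yF: "y \<in> F" using y by simp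
          have "lt m y" using True xy insert.prems(2) m(1) yF by blast
          then show False using m yF by blast
        qed
      qed
    qed
    then show ?thesis by blast
  next
    case False then show ?thesis using m by blast
  qed
qed

lemma F1:
  assumes po: "poset X lt" and sm: "strong_module X lt M" and nub: "\<not> (\<exists>y\<in>X. \<forall>m\<in>M. lt m y)"
    and z: "z \<in> X" "z \<notin> M" and m: "m \<in> M" and mz: "lt m z"
  shows False
proof -
  have irr: "\<forall>x\<in>X. \<not> lt x x" and tr: "\<forall>x\<in>X. \<forall>y\<in>X. \<forall>z\<in>X. lt x y \<and> lt y z \<longrightarrow> lt x z"
    and fin: "finite X" using po unfolding poset_def by blast+
  have trr: "lt x y \<Longrightarrow> lt y w \<Longrightarrow> x \<in> X \<Longrightarrow> y \<in> X \<Longrightarrow> w \<in> X \<Longrightarrow> lt x w" for x y w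
    using tr by blast
  have mod: "module X lt M" and st: "\<forall>M'. module X lt M' \<longrightarrow> M \<inter> M' = {} \<or> M \<subseteq> M' \<or> M' \<subseteq> M"
    using sm unfolding strong_module_def by blast+
  have MX: "M \<subseteq> X" using mod by (simp add: module_def)
  have allc: "\<forall>m'\<in>M. comparable lt y m'" if "y \<in> X" "y \<notin> M" "m'' \<in> M" "comparable lt y m''" for y m''
    using mod that unfolding module_def by blast
  define A where "A = {y \<in> X - M. (\<exists>m\<in>M. lt m y) \<and> (\<exists>m\<in>M. lt y m)}"
  define low where "low = {m \<in> M. \<exists>y\<in>A. lt m y}"
  define N where "N = A \<union> low"
  have zc: "\<forall>m'\<in>M. comparable lt z m'" using allc[OF z m] mz by (simp add: comparable_def)
  obtain m' where m': "m' \<in> M" "\<not> lt m' z" using nub z by blast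
  then have "lt z m'" using zc by (auto simp: comparable_def)
  then have zA: "z \<in> A" unfolding A_def using z m mz m' by blast
  have "module X lt N"
    unfolding module_def
  proof (intro conjI ballI)
    show "N \<subseteq> X" unfolding N_def A_def low_def using MX by auto
  next
    fix w assume w: "w \<in> X - N"
    show "(\<forall>n\<in>N. comparable lt w n) \<or> (\<forall>n\<in>N. \<not> comparable lt w n)"
    proof (cases "w \<in> M")
      case True
      have wl: "w \<notin> low" using w N_def by auto
      have "\<forall>n\<in>N. comparable lt w n"
      proof
        fix n assume n: "n \<in> N"
        show "comparable lt w n"
        proof (cases "n \<in> A")
          case True
          then have "comparable lt n w" using allc \<open>w \<in> M\<close> unfolding A_def comparable_def by blast
          moreover have "\<not> lt w n" using wl True \<open>w \<in> M\<close> unfolding low_def by blast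
          ultimately show ?thesis by (auto simp: comparable_def)
        next
          case False
          then have "n \<in> low" using n N_def by auto
          then obtain y where y: "y \<in> A" "lt n y" unfolding low_def by blast
          have "comparable lt y w" using allc y \<open>w \<in> M\<close> unfolding A_def comparable_def by blast
          moreover have "\<not> lt w y" using wl y \<open>w \<in> M\<close> unfolding low_def by blast
          ultimately have "lt y w" by (auto simp: comparable_def)
          moreover have "n \<in> X" "y \<in> X" "w \<in> X" using \<open>n \<in> low\<close> y w MX unfolding low_def A_def by auto
          ultimately have "lt n w" using trr \<open>lt n y\<close> by blast
          then show ?thesis by (simp add: comparable_def)
        qed
      qed
      then show ?thesis by blast
    next
      case False
      have wX: "w \<in> X" using w by simp
      have "(\<forall>m\<in>M. comparable lt w m) \<or> (\<forall>m\<in>M. \<not> comparable lt w m)"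
        using mod wX False unfolding module_def by blast
      then show ?thesis
      proof
        assume all: "\<forall>m\<in>M. comparable lt w m"
        obtain m1 where m1: "m1 \<in> M" "\<not> lt m1 w" using nub wX by blast
        have nA: "w \<notin> A" using w N_def by auto
        have nlow: "\<forall>m\<in>M. \<not> lt m w"
        proof (intro ballI notI)
          fix m assume "m \<in> M" "lt m w"
          moreover have "lt w m1" using all m1 by (auto simp: comparable_def)
          ultimately have "w \<in> A" unfolding A_def using wX False m1 by blast
          then show False using nA by simp
        qed
        have wlt: "\<forall>m\<in>M. lt w m" using all nlow by (auto simp: comparable_def)
        have "\<forall>n\<in>N. comparable lt w n"
        proof
          fix n assume n: "n \<in> N"
          show "comparable lt w n"
          proof (cases "n \<in> A")
            case True
            then obtain m where "m \<in> M" "lt m n" "n \<in> X" unfolding A_def by blast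
            moreover have "m \<in> X" using MX \<open>m \<in> M\<close> by auto
            ultimately have "lt w n" using trr[of w m n] wlt wX by blast
            then show ?thesis by (simp add: comparable_def)
          next
            case False
            then have "n \<in> M" using n N_def low_def by auto
            then show ?thesis using wlt by (simp add: comparable_def)
          qed
        qed
        then show ?thesis by blast
      next
        assume none: "\<forall>m\<in>M. \<not> comparable lt w m"
        have "\<forall>n\<in>N. \<not> comparable lt w n"
        proof
          fix n assume n: "n \<in> N"
          show "\<not> comparable lt w n"
          proof (cases "n \<in> A")
            case True
            then obtain m1 m2 where mm: "m1 \<in> M" "lt m1 n" "m2 \<in> M" "lt n m2" "n \<in> X" unfolding A_def by blast
            have "m1 \<in> X" "m2 \<in> X" using MX mm by auto
            show ?thesis
            proof
              assume "comparable lt w n"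
              then have "lt w n \<or> lt n w" by (simp add: comparable_def)
              then have "lt w m2 \<or> lt m1 w" using trr[of w n m2] trr[of m1 n w] mm wX \<open>m1 \<in> X\<close> \<open>m2 \<in> X\<close> by blast
              then show False using none mm by (auto simp: comparable_def)
            qed
          next
            case False
            then have "n \<in> M" using n N_def low_def by auto
            then show ?thesis using none by simp
          qed
        qed
        then show ?thesis by blast
      qed
    qed
  qed
  then have "M \<inter> N = {} \<or> M \<subseteq> N \<or> N \<subseteq> M" using st by blast
  moreover have "M \<inter> N \<noteq> {}"
  proof -
    have "m \<in> low" unfolding low_def using m zA mz by blast
    then show ?thesis using m N_def by auto
  qed
  moreover have "\<not> N \<subseteq> M" using zA z N_def by auto
  moreover have "\<not> M \<subseteq> N"
  proof -
    have "M \<noteq> {}" using m by auto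
    moreover have "finite M" using fin MX finite_subset by auto
    moreover have "\<forall>x\<in>M. \<not> lt x x" using irr MX by blast
    moreover have "\<forall>x\<in>M. \<forall>y\<in>M. \<forall>w\<in>M. lt x y \<and> lt y w \<longrightarrow> lt x w" using trr MX by blast
    ultimately obtain mx where mx: "mx \<in> M" "\<forall>y\<in>M. \<not> lt mx y"
      using finite_max_rel[of M lt] by blast
    have "mx \<notin> low"
    proof
      assume "mx \<in> low"
      then obtain y where y: "y \<in> A" "lt mx y" unfolding low_def by blast
      then obtain m2 where m2: "m2 \<in> M" "lt y m2" "y \<in> X" unfolding A_def by blast
      have "lt mx m2" using trr[of mx y m2] y m2 mx MX by blast
      then show False using mx m2 by blast
    qed
    moreover have "mx \<notin> A" using mx A_def by auto
    ultimately show ?thesis using mx N_def by auto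
  qed
  ultimately show False by blast
qed

lemma F2:
  assumes sm: "strong_module X lt M" and cr: "cpt_rep X lt V E W"
    and z: "z \<in> X" "z \<notin> M" and m: "m \<in> M" and m2: "m2 \<in> M" "m2 \<noteq> m" and eq: "W z = W m"
  shows False
proof -
  have mod: "module X lt M" and st: "\<forall>M'. module X lt M' \<longrightarrow> M \<inter> M' = {} \<or> M \<subseteq> M' \<or> M' \<subseteq> M"
    using sm unfolding strong_module_def by blast+
  have MX: "M \<subseteq> X" using mod by (simp add: module_def)
  have rel: "\<forall>x\<in>X. \<forall>y\<in>X. lt x y \<longleftrightarrow> W x \<subset> W y" using cr by (simp add: cpt_rep_def)
  have "module X lt {z, m}"
    unfolding module_def
  proof (intro conjI ballI)
    show "{z, m} \<subseteq> X" using z m MX by auto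
    fix w assume w: "w \<in> X - {z, m}"
    have "comparable lt w z \<longleftrightarrow> comparable lt w m"
      using rel w z m MX eq unfolding comparable_def by (metis DiffD1 subsetD)
    then show "(\<forall>n\<in>{z, m}. comparable lt w n) \<or> (\<forall>n\<in>{z, m}. \<not> comparable lt w n)" by auto
  qed
  then have "M \<inter> {z, m} = {} \<or> M \<subseteq> {z, m} \<or> {z, m} \<subseteq> M" using st by blast
  then show False using z m m2 by auto
qed

lemma list_less_append: "(xs :: 'a :: linorder list) < xs @ y # ys"
  by (induction xs) auto

lemma list_less_diff: "(x :: 'a :: linorder) \<noteq> y \<Longrightarrow> (p @ x # q < p @ y # r) \<longleftrightarrow> x < y"
  by (induction p) auto

lemma lex2:
  fixes g :: "'v \<Rightarrow> int" and i j :: int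
  assumes inj: "inj_on g (set xs \<union> set ys)" and ij: "i \<noteq> j"
  shows "((map g xs, i) < (map g ys, j) \<and> (map (\<lambda>v. - g v) xs, - i) < (map (\<lambda>v. - g v) ys, - j))
     \<longleftrightarrow> strict_prefix xs ys"
proof (cases "xs = ys")
  case True then show ?thesis using ij by (auto simp: less_prod_def)
next
  case neq: False
  show ?thesis
  proof (cases "strict_prefix xs ys")
    case True
    then obtain y zs where "ys = xs @ y # zs" by (metis strict_prefixE' )
    then show ?thesis using True by (simp add: less_prod_def list_less_append)
  next
    case nsp: False
    show ?thesis
    proof (cases "strict_prefix ys xs")
      case True
      then obtain y zs where "xs = ys @ y # zs" by (metis strict_prefixE')
      then have "map g ys < map g xs" by (simp add: list_less_append)
      then show ?thesis using nsp by (auto simp: less_prod_def)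
    next
      case False
      then have "xs \<parallel> ys" using nsp neq unfolding parallel_def strict_prefix_def by blast
      then obtain as b bs c cs where d: "b \<noteq> c" "xs = as @ b # bs" "ys = as @ c # cs"
        using parallel_decomp by blast
      have "g b \<noteq> g c" using inj d by (auto simp: inj_on_def)
      then have "map g xs < map g ys \<longleftrightarrow> g b < g c" "map (\<lambda>v. - g v) xs < map (\<lambda>v. - g v) ys \<longleftrightarrow> - g b < - g c"
        using d by (simp_all add: list_less_diff)
      moreover have "map g xs \<noteq> map g ys" using \<open>g b \<noteq> g c\<close> d by simp
      moreover have "map (\<lambda>v. - g v) xs \<noteq> map (\<lambda>v. - g v) ys" using \<open>g b \<noteq> g c\<close> d by simp
      ultimately show ?thesis using nsp by (auto simp: less_prod_def)
    qed
  qed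
qed

definition rk :: "('a \<Rightarrow> 'k :: linorder) \<Rightarrow> 'a set \<Rightarrow> 'a \<Rightarrow> nat" where
  "rk k S x = card {y \<in> S. k y < k x}"

lemma rk_less:
  assumes "finite S" "inj_on k S" "x \<in> S" "y \<in> S"
  shows "rk k S x < rk k S y \<longleftrightarrow> k x < k y"
proof
  assume "k x < k y"
  then have "{z \<in> S. k z < k x} \<subset> {z \<in> S. k z < k y}" using assms by auto
  then show "rk k S x < rk k S y" unfolding rk_def using assms by (simp add: psubset_card_mono)
next
  assume a: "rk k S x < rk k S y"
  show "k x < k y"
  proof (rule ccontr)
    assume "\<not> k x < k y"
    then have "{z \<in> S. k z < k y} \<subseteq> {z \<in> S. k z < k x}" by auto
    then have "rk k S y \<le> rk k S x" unfolding rk_def using assms by (simp add: card_mono)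
    then show False using a by simp
  qed
qed

lemma rk_inj:
  assumes "finite S" "inj_on k S" "x \<in> S" "y \<in> S" "rk k S x = rk k S y"
  shows "x = y"
proof -
  have "\<not> k x < k y" "\<not> k y < k x" using rk_less[OF assms(1,2)] assms by (metis less_irrefl)+
  then have "k x = k y" by simp
  then show ?thesis using assms by (auto simp: inj_on_def)
qed

lemma rk_bound: "finite S \<Longrightarrow> x \<in> S \<Longrightarrow> rk k S x < card S"
  unfolding rk_def by (rule psubset_card_mono) auto

definition ysl :: "nat \<Rightarrow> 'v list \<Rightarrow> nat \<Rightarrow> ('v + bool \<times> nat) list" where
  "ysl l Lc r = map (\<lambda>i. Inr (True, i)) (rev [1..<Suc l]) @ map Inl Lc @ map (\<lambda>i. Inr (False, i)) [1..<Suc r]"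

lemma ysl_set: "set (ysl l Lc r) = (\<lambda>i. Inr (True, i)) ` {1..l} \<union> Inl ` set Lc \<union> (\<lambda>i. Inr (False, i)) ` {1..r}"
  unfolding ysl_def by auto

lemma Inl_path: "is_path E xs \<Longrightarrow> is_path (En E a c n) (map Inl xs)"
  unfolding is_path_def En_def by (auto simp: distinct_map)

lemma ysl_path:
  fixes V :: "'v set" and Lc :: "'v list"
  assumes t: "tree V E" and a: "a \<in> V" and c: "c \<in> V" and p: "is_path E Lc" and sv: "set Lc \<subseteq> V"
    and h: "hd Lc = a" and la: "last Lc = c" and l: "1 \<le> l" "l \<le> n" and r: "1 \<le> r" "r \<le> n"
  shows "is_path (En E a c n) (ysl l Lc r) \<and> set (ysl l Lc r) \<subseteq> Vn V n
    \<and> hd (ysl l Lc r) = Inr (True, l) \<and> last (ysl l Lc r) = Inr (False, r)"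
proof -
  let ?E = "En E a c n"
  have tt: "tree (Vn V n) ?E" using pend_tree[OF t a c] .
  have s: "\<forall>x y. ?E x y \<longrightarrow> ?E y x" using tt by (simp add: tree_def)
  have ne: "Lc \<noteq> []" using p by (simp add: is_path_def)
  let ?P = "map (\<lambda>i. Inr (True, i)) [1..<Suc l] :: ('v + bool \<times> nat) list"
  let ?Q = "map (\<lambda>i. Inr (False, i)) [1..<Suc r] :: ('v + bool \<times> nat) list"
  let ?L = "map Inl Lc :: ('v + bool \<times> nat) list"
  have pP: "is_path ?E ?P"
  proof (rule is_path_map_upt)
    show "1 < Suc l" using l by simp
    show "inj_on (\<lambda>i. Inr (True, i) :: 'v + bool \<times> nat) {1..<Suc l}" by (auto simp: inj_on_def)
    fix k assume "1 \<le> k" "Suc k < Suc l"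
    then show "?E (Inr (True, k)) (Inr (True, Suc k))" using l unfolding En_def pP_def
      by (intro disjI2 disjI1) (rule exI[of _ k], auto)
  qed
  have pQ: "is_path ?E ?Q"
  proof (rule is_path_map_upt)
    show "1 < Suc r" using r by simp
    show "inj_on (\<lambda>i. Inr (False, i) :: 'v + bool \<times> nat) {1..<Suc r}" by (auto simp: inj_on_def)
    fix k assume "1 \<le> k" "Suc k < Suc r"
    then show "?E (Inr (False, k)) (Inr (False, Suc k))" using r unfolding En_def pQ_def
      by (intro disjI2) (rule exI[of _ k], auto)
  qed
  have pL: "is_path ?E ?L" using Inl_path[OF p] .
  have eq: "ysl l Lc r = (rev ?P @ ?L) @ ?Q" unfolding ysl_def by (simp add: rev_map)
  have hP: "hd ?P = Inr (True, 1)" using l by (simp add: upt_rec)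
  have lQ: "last ?Q = Inr (False, r)" using r by (simp add: last_map)
  have hQ: "hd ?Q = Inr (False, 1)" using r by (simp add: upt_rec)
  have lP: "last ?P = Inr (True, l)" using l by (simp add: last_map)
  have e1: "?E (Inr (True, 1)) (Inl a)" using l unfolding En_def pP_def
    by (intro disjI2 disjI1) (rule exI[of _ 0], auto)
  have e2: "?E (Inl c) (Inr (False, 1))" using r unfolding En_def pQ_def
    by (intro disjI2) (rule exI[of _ 0], auto)
  have p1: "is_path ?E (rev ?P @ ?L)"
    apply (rule is_path_append[OF is_path_rev[OF s pP] pL])
    using hP e1 h ne by (auto simp: last_rev hd_map)
  have p2: "is_path ?E ((rev ?P @ ?L) @ ?Q)"
    apply (rule is_path_append[OF p1 pQ])
    using hQ e2 la ne by (auto simp: last_map)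
  have sub: "set (ysl l Lc r) \<subseteq> Vn V n" using sv l r unfolding ysl_set Vn_def by auto
  have hd: "hd (ysl l Lc r) = Inr (True, l)" using l unfolding ysl_def by (simp add: hd_map hd_rev lP)
  have lst: "last (ysl l Lc r) = Inr (False, r)" using r unfolding ysl_def by (simp add: lQ)
  show ?thesis using p2 eq sub hd lst by simp
qed

lemma ysl_sub:
  assumes "1 \<le> l" "1 \<le> r"
  shows "set (ysl l C r) \<subseteq> set (ysl l' C r') \<longleftrightarrow> l \<le> l' \<and> r \<le> r'"
proof
  assume s: "set (ysl l C r) \<subseteq> set (ysl l' C r')"
  have "Inr (True, l) \<in> set (ysl l C r)" "Inr (False, r) \<in> set (ysl l C r)" using assms unfolding ysl_set by auto
  then have "Inr (True, l) \<in> set (ysl l' C r')" "Inr (False, r) \<in> set (ysl l' C r')" using s by auto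
  then show "l \<le> l' \<and> r \<le> r'" unfolding ysl_set by auto
next
  assume "l \<le> l' \<and> r \<le> r'"
  then show "set (ysl l C r) \<subseteq> set (ysl l' C r')" unfolding ysl_set by auto
qed

lemma inj_image_psubset:
  assumes "inj_on h V" "A \<subseteq> V" "B \<subseteq> V"
  shows "h ` A \<subset> h ` B \<longleftrightarrow> A \<subset> B"
proof -
  have "h ` A \<subseteq> h ` B \<longleftrightarrow> A \<subseteq> B"
  proof
    assume s: "h ` A \<subseteq> h ` B"
    show "A \<subseteq> B"
    proof
      fix x assume x: "x \<in> A"
      then have "h x \<in> h ` B" using s by blast
      moreover have "x \<in> V" using x assms by blast
      ultimately show "x \<in> B" using inj_on_image_mem_iff[OF assms(1) _ assms(3)] by blast
    qed
  qed blast
  moreover have "h ` A = h ` B \<longleftrightarrow> A = B" using assms by (rule inj_on_image_eq_iff)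
  ultimately show ?thesis by blast
qed

lemma Inl_psubset: "(Inl ` A :: ('a + 'b) set) \<subset> Inl ` B \<longleftrightarrow> A \<subset> B"
  by (rule inj_image_psubset[of Inl UNIV]) auto

lemma prefix_iff_subset:
  assumes t: "tree V E" and p: "is_path E p" and q: "is_path E q" and sp: "set p \<subseteq> V" and sq: "set q \<subseteq> V"
    and h: "hd p = hd q"
  shows "strict_prefix p q \<longleftrightarrow> set p \<subset> set q"
proof
  assume sp': "strict_prefix p q"
  then have "set p \<subseteq> set q" by (metis prefix_order.less_imp_le set_mono_prefix)
  moreover have "set p \<noteq> set q"
  proof
    assume "set p = set q"
    then have "prefix q p" using prefix_of_subset[OF t q p sq] h by simp
    then show False using sp' by (simp add: prefix_order.leD)
  qed
  ultimately show "set p \<subset> set q" by blast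
next
  assume ss: "set p \<subset> set q"
  then have "prefix p q" using prefix_of_subset[OF t p q sp h] by blast
  moreover have "p \<noteq> q" using ss by blast
  ultimately show "strict_prefix p q" by (simp add: strict_prefix_def)
qed

theorem mainTheorem10:
  fixes X :: "'a set" and lt :: "'a \<Rightarrow> 'a \<Rightarrow> bool" and M :: "'a set"
    and V :: "'v set" and E :: "'v \<Rightarrow> 'v \<Rightarrow> bool" and W :: "'a \<Rightarrow> 'v set" and a :: 'v
  assumes "poset X lt"
    and "dually_CPT X lt"
    and "strong_module X lt M"
    and "cpt_rep X lt V E W"
    and "\<forall>m\<in>M. endpoint E a (W m)"
    and "\<not> (\<exists>y\<in>X. \<forall>m\<in>M. lt m y)"
  shows "\<exists>(V' :: nat set) E' W'. cpt_rep X lt V' E' W' \<and>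
           (\<forall>m\<in>M. \<forall>m'\<in>M. m \<noteq> m' \<longrightarrow>
              (\<forall>v. endpoint E' v (W' m) \<longrightarrow> \<not> endpoint E' v (W' m')))"
proof (cases "\<exists>m1\<in>M. \<exists>m2\<in>M. m1 \<noteq> m2")
  case False
  obtain V' :: "nat set" and E' W' where "cpt_rep X lt V' E' W'"
    using assms(2) unfolding dually_CPT_def is_CPT_def by blast
  then show ?thesis using False by blast
next
  case True
  then obtain m1 m2 where m12: "m1 \<in> M" "m2 \<in> M" "m1 \<noteq> m2" by blast
  note po = assms(1) and sm = assms(3) and cr = assms(4) and ep = assms(5) and nub = assms(6)
  have t: "tree V E" using cr by (simp add: cpt_rep_def)
  have rel: "\<forall>x\<in>X. \<forall>y\<in>X. lt x y \<longleftrightarrow> W x \<subset> W y" using cr by (simp add: cpt_rep_def)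
  have tp: "\<forall>x\<in>X. tree_path V E (W x)" using cr by (simp add: cpt_rep_def)
  have WV: "W x \<subseteq> V" if "x \<in> X" for x using tp that unfolding tree_path_def by blast
  have finX: "finite X" using po by (simp add: poset_def)
  have irr: "\<forall>x\<in>X. \<not> lt x x" using po by (simp add: poset_def)
  have mod: "module X lt M" using sm by (simp add: strong_module_def)
  have MX: "M \<subseteq> X" using mod by (simp add: module_def)
  have finM: "finite M" using finX MX finite_subset by blast
  have s: "\<forall>x y. E x y \<longrightarrow> E y x" using t by (simp add: tree_def)
  have "\<forall>m\<in>M. \<exists>xs. is_path E xs \<and> set xs = W m \<and> hd xs = a"
  proof
    fix m assume m: "m \<in> M"
    obtain xs where xs: "is_path E xs" "set xs = W m" "a = hd xs \<or> a = last xs"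
      using ep m unfolding endpoint_def by blast
    show "\<exists>xs. is_path E xs \<and> set xs = W m \<and> hd xs = a"
    proof (cases "a = hd xs")
      case True then show ?thesis using xs by blast
    next
      case False
      then have "a = last xs" using xs by blast
      then have "hd (rev xs) = a" using xs(1) by (simp add: is_path_def hd_rev)
      then show ?thesis using is_path_rev[OF s xs(1)] xs(2) by auto
    qed
  qed
  then obtain L where L: "\<And>m. m \<in> M \<Longrightarrow> is_path E (L m) \<and> set (L m) = W m \<and> hd (L m) = a"
    by metis
  have LV: "set (L m) \<subseteq> V" if "m \<in> M" for m using L[OF that] WV[of m] MX that by auto
  have aV: "a \<in> V" using L[OF m12(1)] LV[OF m12(1)] is_path_nonempty[of E "L m1"] by (metis hd_in_set subsetD)
  have Lpre: "W m \<subset> W m' \<longleftrightarrow> strict_prefix (L m) (L m')" if "m \<in> M" "m' \<in> M" for m m'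
    using prefix_iff_subset[OF t _ _ LV[OF that(1)] LV[OF that(2)]] L that by simp
  have F1': "\<not> lt m z" if "z \<in> X" "z \<notin> M" "m \<in> M" for z m
    using F1[OF po sm nub that] by blast
  have F2': "W z \<noteq> W m" if "z \<in> X" "z \<notin> M" "m \<in> M" for z m
  proof
    assume eq: "W z = W m"
    obtain m' where "m' \<in> M" "m' \<noteq> m" using m12 by metis
    then show False using F2[OF sm cr that _ _ eq] that by blast
  qed
  have below_all: "lt z m'" if "z \<in> X" "z \<notin> M" "m \<in> M" "lt z m" "m' \<in> M" for z m m'
  proof -
    have "comparable lt z m" using that by (simp add: comparable_def)
    then have "comparable lt z m'" using mod that unfolding module_def by blast
    then show ?thesis using F1'[OF that(1,2,5)] by (simp add: comparable_def)
  qed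
  obtain f :: "'v \<Rightarrow> nat" and nf where f: "inj_on f V"
    using finite_imp_inj_to_nat_seg[of V] t unfolding tree_def by blast
  obtain idx :: "'a \<Rightarrow> nat" and ni where idx: "inj_on idx M"
    using finite_imp_inj_to_nat_seg[OF finM] by blast
  define g where "g = (\<lambda>v. int (f v))"
  have ginj: "inj_on g V" using f unfolding g_def by (auto simp: inj_on_def)
  define key1 where "key1 = (\<lambda>m. (map g (L m), int (idx m)))"
  define key2 where "key2 = (\<lambda>m. (map (\<lambda>v. - g v) (L m), - int (idx m)))"
  have k1inj: "inj_on key1 M" using idx unfolding key1_def by (auto simp: inj_on_def)
  have k2inj: "inj_on key2 M" using idx unfolding key2_def by (auto simp: inj_on_def)
  have keys: "(key1 m < key1 m' \<and> key2 m < key2 m') \<longleftrightarrow> lt m m'" if "m \<in> M" "m' \<in> M" "m \<noteq> m'" for m m'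
  proof -
    have "int (idx m) \<noteq> int (idx m')" using idx that by (auto simp: inj_on_def)
    moreover have "inj_on g (set (L m) \<union> set (L m'))" using ginj LV that by (meson inj_on_subset le_sup_iff)
    ultimately have "(key1 m < key1 m' \<and> key2 m < key2 m') \<longleftrightarrow> strict_prefix (L m) (L m')"
      unfolding key1_def key2_def using lex2 by blast
    also have "\<dots> \<longleftrightarrow> W m \<subset> W m'" using Lpre that by simp
    also have "\<dots> \<longleftrightarrow> lt m m'" using rel that MX by blast
    finally show ?thesis .
  qed
  define N where "N = card M"
  define l where "l = (\<lambda>m. Suc (rk key1 M m))"
  define r where "r = (\<lambda>m. Suc (rk key2 M m))"
  have lb: "1 \<le> l m \<and> l m \<le> N" if "m \<in> M" for m
    using rk_bound[of M m key1] finM that unfolding l_def N_def by (simp add: Suc_leI)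
  have rb: "1 \<le> r m \<and> r m \<le> N" if "m \<in> M" for m
    using rk_bound[of M m key2] finM that unfolding r_def N_def by (simp add: Suc_leI)
  have linj: "m = m'" if "m \<in> M" "m' \<in> M" "l m = l m'" for m m'
    using rk_inj[OF finM k1inj that(1,2)] that unfolding l_def by simp
  have rinj: "m = m'" if "m \<in> M" "m' \<in> M" "r m = r m'" for m m'
    using rk_inj[OF finM k2inj that(1,2)] that unfolding r_def by simp
  have lless: "l m < l m' \<longleftrightarrow> key1 m < key1 m'" if "m \<in> M" "m' \<in> M" for m m'
    using rk_less[OF finM k1inj that] unfolding l_def by simp
  have rless: "r m < r m' \<longleftrightarrow> key2 m < key2 m'" if "m \<in> M" "m' \<in> M" for m m'
    using rk_less[OF finM k2inj that] unfolding r_def by simp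
  define L0 where "L0 = L m1"
  define K where "K = {k. k \<le> length L0 \<and> (\<forall>m\<in>M. set (take k L0) \<subseteq> W m)}"
  define k where "k = Max K"
  have L0p: "is_path E L0" "hd L0 = a" "set L0 = W m1" using L[OF m12(1)] unfolding L0_def by auto
  have L0ne: "L0 \<noteq> []" using L0p by (simp add: is_path_def)
  have finK: "finite K" unfolding K_def by simp
  have oneK: "1 \<in> K"
  proof -
    have "set (take 1 L0) = {a}" using L0ne L0p by (cases L0) auto
    moreover have "a \<in> W m" if "m \<in> M" for m using L[OF that] is_path_nonempty by (metis hd_in_set)
    ultimately show ?thesis unfolding K_def using L0ne by (simp add: Suc_leI)
  qed
  have kK: "k \<in> K" unfolding k_def using finK oneK Max_in by blast
  have k1: "1 \<le> k" unfolding k_def using finK oneK Max_ge by blast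
  have kmax: "j \<le> k" if "j \<in> K" for j unfolding k_def using finK that Max_ge by blast
  define Lc where "Lc = take k L0"
  have Lcp: "is_path E Lc" unfolding Lc_def using is_path_take[OF L0p(1)] k1 by simp
  have Lcne: "Lc \<noteq> []" using Lcp by (simp add: is_path_def)
  have Lch: "hd Lc = a" unfolding Lc_def using L0p L0ne k1 by (cases L0) auto
  have LcW: "set Lc \<subseteq> W m" if "m \<in> M" for m using kK that unfolding K_def Lc_def by blast
  have LcV: "set Lc \<subseteq> V" using LcW[OF m12(1)] WV[of m1] MX m12 by auto
  define c where "c = last Lc"
  have cV: "c \<in> V" using LcV Lcne unfolding c_def by auto
  have Dcore: "W z \<subseteq> set Lc" if z: "z \<in> X" "z \<notin> M" "m \<in> M" "lt z m" for z m
  proof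
    fix u assume u: "u \<in> W z"
    have zm1: "W z \<subset> W m1" using below_all[OF z m12(1)] rel z MX m12 by blast
    then have "u \<in> set L0" using u L0p by blast
    then obtain j where j: "j < length L0" "L0 ! j = u" by (auto simp: in_set_conv_nth)
    have "Suc j \<in> K" unfolding K_def
    proof (intro CollectI conjI ballI)
      show "Suc j \<le> length L0" using j by simp
      fix m' assume m': "m' \<in> M"
      have "W z \<subset> W m'" using below_all[OF z m'] rel z MX m' by blast
      then have "u \<in> set (L m')" using u L[OF m'] by blast
      then obtain i where i: "i < length (L m')" "L m' ! i = u" by (auto simp: in_set_conv_nth)
      have "take (Suc j) L0 = take (Suc i) (L m')"
        using common_prefix[OF t L0p(1) _ _ _ j(1) i(1)] L[OF m'] L0p LV[OF m12(1)] i j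
        unfolding L0_def by auto
      then show "set (take (Suc j) L0) \<subseteq> W m'" using L[OF m'] by (metis set_take_subset)
    qed
    then have "Suc j \<le> k" using kmax by blast
    then show "u \<in> set Lc" unfolding Lc_def using j by (metis in_set_conv_nth length_take min_less_iff_conj nth_take Suc_le_lessD)
  qed
  define V' where "V' = Vn V N"
  define E' where "E' = En E a c N"
  have t': "tree V' E'" unfolding V'_def E'_def using pend_tree[OF t aV cV] .
  define ys where "ys = (\<lambda>m. ysl (l m) Lc (r m))"
  have ysp: "is_path E' (ys m) \<and> set (ys m) \<subseteq> V' \<and> hd (ys m) = Inr (True, l m) \<and> last (ys m) = Inr (False, r m)"
    if "m \<in> M" for m
    unfolding ys_def V'_def E'_def
    using ysl_path[OF t aV cV Lcp LcV Lch _ _ _ _ _] lb[OF that] rb[OF that] c_def by blast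
  define W' where "W' = (\<lambda>x. if x \<in> M then set (ys x) else Inl ` W x)"
  have W'V: "W' x \<subseteq> V'" if "x \<in> X" for x
    using ysp WV[OF that] unfolding W'_def V'_def Vn_def by auto
  have cr': "cpt_rep X lt V' E' W'"
    unfolding cpt_rep_def
  proof (intro conjI ballI)
    show "tree V' E'" by (rule t')
  next
    fix x assume x: "x \<in> X"
    show "tree_path V' E' (W' x)"
    proof (cases "x \<in> M")
      case True then show ?thesis using ysp[OF True] unfolding tree_path_def W'_def by auto
    next
      case False
      obtain xs where xs: "is_path E xs" "set xs \<subseteq> V" "set xs = W x" using tp x unfolding tree_path_def by blast
      have "is_path E' (map Inl xs)" unfolding E'_def using Inl_path[OF xs(1)] .
      moreover have "set (map Inl xs) \<subseteq> V'" using xs unfolding V'_def Vn_def by auto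
      moreover have "set (map Inl xs) = W' x" using xs False unfolding W'_def by simp
      ultimately show ?thesis unfolding tree_path_def by blast
    qed
  next
    fix x y assume x: "x \<in> X" and y: "y \<in> X"
    show "lt x y \<longleftrightarrow> W' x \<subset> W' y"
    proof (cases "x \<in> M")
      case xM: True
      show ?thesis
      proof (cases "y \<in> M")
        case yM: True
        show ?thesis
        proof (cases "x = y")
          case True then show ?thesis using irr x by auto
        next
          case False
          have "W' x \<subset> W' y \<longleftrightarrow> (l x \<le> l y \<and> r x \<le> r y) \<and> \<not> (l y \<le> l x \<and> r y \<le> r x)"
          proof -
            have sx: "set (ys x) \<subseteq> set (ys y) \<longleftrightarrow> l x \<le> l y \<and> r x \<le> r y"
              using ysl_sub[of "l x" "r x" Lc "l y" "r y"] lb[OF xM] rb[OF xM] unfolding ys_def by simp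
            have sy: "set (ys y) \<subseteq> set (ys x) \<longleftrightarrow> l y \<le> l x \<and> r y \<le> r x"
              using ysl_sub[of "l y" "r y" Lc "l x" "r x"] lb[OF yM] rb[OF yM] unfolding ys_def by simp
            have "W' x \<subset> W' y \<longleftrightarrow> set (ys x) \<subseteq> set (ys y) \<and> \<not> set (ys y) \<subseteq> set (ys x)"
              unfolding W'_def using xM yM by (simp add: less_le_not_le)
            then show ?thesis using sx sy by simp
          qed
          also have "\<dots> \<longleftrightarrow> l x < l y \<and> r x < r y"
          proof -
            have "l x \<noteq> l y" "r x \<noteq> r y" using linj[OF xM yM] rinj[OF xM yM] False by blast+
            then show ?thesis by auto
          qed
          also have "\<dots> \<longleftrightarrow> lt x y" using lless[OF xM yM] rless[OF xM yM] keys[OF xM yM False] by simp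
          finally show ?thesis by simp
        qed
      next
        case yM: False
        have "\<not> lt x y" using F1'[OF y yM xM] .
        moreover have "Inr (True, l x) \<in> W' x" using xM lb[OF xM] unfolding W'_def ys_def ysl_set by auto
        moreover have "Inr (True, l x) \<notin> W' y" using yM unfolding W'_def by auto
        ultimately show ?thesis by blast
      qed
    next
      case xM: False
      show ?thesis
      proof (cases "y \<in> M")
        case yM: True
        have "W' x \<subset> W' y \<longleftrightarrow> W x \<subseteq> set Lc"
        proof
          assume "W' x \<subset> W' y"
          then have "Inl ` W x \<subseteq> set (ys y)" using xM yM unfolding W'_def by auto
          then show "W x \<subseteq> set Lc" unfolding ys_def ysl_set by auto
        next
          assume a1: "W x \<subseteq> set Lc"
          then have "Inl ` W x \<subseteq> set (ys y)" unfolding ys_def ysl_set by auto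
          moreover have "Inr (True, l y) \<in> set (ys y)" using lb[OF yM] unfolding ys_def ysl_set by auto
          ultimately show "W' x \<subset> W' y" using xM yM unfolding W'_def by auto
        qed
        also have "\<dots> \<longleftrightarrow> lt x y"
        proof
          assume "W x \<subseteq> set Lc"
          then have "W x \<subseteq> W y" using LcW[OF yM] by blast
          moreover have "W x \<noteq> W y" using F2'[OF x xM yM] .
          ultimately show "lt x y" using rel x y by blast
        next
          assume "lt x y"
          then show "W x \<subseteq> set Lc" using Dcore[OF x xM yM] by blast
        qed
        finally show ?thesis by simp
      next
        case yM: False
        have "W' x \<subset> W' y \<longleftrightarrow> (Inl ` W x :: ('v + bool \<times> nat) set) \<subset> Inl ` W y" using xM yM unfolding W'_def by simp
        also have "\<dots> \<longleftrightarrow> W x \<subset> W y" by (rule Inl_psubset)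
        finally show ?thesis using rel x y by blast
      qed
    qed
  qed
  have finV': "finite V'" using t' by (simp add: tree_def)
  obtain h :: "'v + bool \<times> nat \<Rightarrow> nat" and nh where h: "inj_on h V'"
    using finite_imp_inj_to_nat_seg[OF finV'] by blast
  define V'' where "V'' = h ` V'"
  define E'' where "E'' = mapE h V' E'"
  define W'' where "W'' = (\<lambda>x. h ` W' x)"
  have t'': "tree V'' E''" unfolding V''_def E''_def using map_tree[OF t' h] .
  have cr'': "cpt_rep X lt V'' E'' W''"
    unfolding cpt_rep_def
  proof (intro conjI ballI)
    show "tree V'' E''" by (rule t'')
  next
    fix x assume x: "x \<in> X"
    obtain xs where xs: "is_path E' xs" "set xs \<subseteq> V'" "set xs = W' x"
      using cr' x unfolding cpt_rep_def tree_path_def by blast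
    have "is_path E'' (map h xs)" unfolding E''_def using map_is_path[OF h xs(1,2)] .
    moreover have "set (map h xs) \<subseteq> V''" using xs unfolding V''_def by auto
    moreover have "set (map h xs) = W'' x" using xs unfolding W''_def by simp
    ultimately show "tree_path V'' E'' (W'' x)" unfolding tree_path_def by blast
  next
    fix x y assume x: "x \<in> X" and y: "y \<in> X"
    have "lt x y \<longleftrightarrow> W' x \<subset> W' y" using cr' x y unfolding cpt_rep_def by blast
    also have "\<dots> \<longleftrightarrow> W'' x \<subset> W'' y" unfolding W''_def using inj_image_psubset[OF h W'V[OF x] W'V[OF y]] by simp
    finally show "lt x y \<longleftrightarrow> W'' x \<subset> W'' y" .
  qed
  have epm: "v = h (Inr (True, l m)) \<or> v = h (Inr (False, r m))" if m: "m \<in> M" and e: "endpoint E'' v (W'' m)" for m v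
  proof -
    have p: "is_path E'' (map h (ys m))" unfolding E''_def using map_is_path[OF h] ysp[OF m] by blast
    have sv: "set (map h (ys m)) \<subseteq> V''" using ysp[OF m] unfolding V''_def by auto
    have "W'' m = set (map h (ys m))" unfolding W''_def W'_def using m by simp
    then have "v = hd (map h (ys m)) \<or> v = last (map h (ys m))" using endpoint_hd_last[OF t'' p sv] e by simp
    moreover have "ys m \<noteq> []" using ysp[OF m] by (simp add: is_path_def)
    ultimately show ?thesis using ysp[OF m] by (simp add: hd_map last_map)
  qed
  have inV: "Inr (True, l m) \<in> V'" "Inr (False, r m) \<in> V'" if "m \<in> M" for m
    using lb[OF that] rb[OF that] unfolding V'_def Vn_def by auto
  have hI: "p = q" if "p \<in> V'" "q \<in> V'" "h p = h q" for p q using h that by (simp add: inj_on_def)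
  have "\<forall>m\<in>M. \<forall>m'\<in>M. m \<noteq> m' \<longrightarrow> (\<forall>v. endpoint E'' v (W'' m) \<longrightarrow> \<not> endpoint E'' v (W'' m'))"
  proof (intro ballI impI allI notI)
    fix m m' v assume m: "m \<in> M" and m': "m' \<in> M" and ne: "m \<noteq> m'"
      and e1: "endpoint E'' v (W'' m)" and e2: "endpoint E'' v (W'' m')"
    have v1: "v = h (Inr (True, l m)) \<or> v = h (Inr (False, r m))" using epm[OF m e1] .
    have v2: "v = h (Inr (True, l m')) \<or> v = h (Inr (False, r m'))" using epm[OF m' e2] .
    have "l m \<noteq> l m'" using linj[OF m m'] ne by blast
    moreover have "r m \<noteq> r m'" using rinj[OF m m'] ne by blast
    ultimately show False using v1 v2 hI inV[OF m] inV[OF m'] by (metis Pair_inject sum.inject(2))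
  qed
  then show ?thesis using cr'' by blast
qed

end
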